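(* Let $\Omega\subset\mathbb{R}^{n+m}$ be a bounded Lipschitz domain and $s\in(0,1)$. Let \[ R_s=\max_{(x,y)\in\Omega}\ \min_{(z,w)\in\partial\Omega}\left(|x-z|^s+|y-w|^s\right). \] Then $\Lambda_\infty(s)=\dfrac1{R_s}$.
   Context: Points of $\mathbb{R}^{n+m}$ are $(x,y)$, $x\in\mathbb{R}^n$, $y\in\mathbb{R}^m$. \[ [u]_{\mathcal W^{s,\infty}(\mathbb{R}^{n+m})}=\max\left\{\sup_{(x,y)\ne(z,y)}\frac{|u(x,y)-u(z,y)|}{|x-z|^s};\ \sup_{(x,y)\ne(x,w)}\frac{|u(x,y)-u(x,w)|}{|y-w|^s}\right\}, \] $\mathcal W^{s,\infty}(\mathbb{R}^{n+m})=\{u\in L^\infty(\mathbb{R}^{n+m}):[u]_{\mathcal W^{s,\infty}(\mathbb{R}^{n+m})}<\infty\}$, and $\Lambda_\infty(s)=\inf\{[u]_{\mathcal W^{s,\infty}(\mathbb{R}^{n+m})}: u\in\mathcal W^{s,\infty}(\mathbb{R}^{n+m}),\ \|u\|_{L^\infty(\Omega)}=1,\ u=0\text{ in }\mathbb{R}^{n+m}\setminus\Omega\}$. *)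

theory Defs
  imports "HOL-Analysis.Analysis"
begin

text \<open>Points of R^(n+m) are pairs (x,y) with x in the euclidean space 'a (dimension n)
  and y in the euclidean space 'b (dimension m).\<close>

text \<open>Bounded Lipschitz domain: nonempty open connected set whose boundary is locally the
  (strict super-)graph of a Lipschitz function over a hyperplane, in suitably rotated
  coordinates (direction e = last coordinate axis after rotation).\<close>
definition lipschitz_domain :: "'c::euclidean_space set \<Rightarrow> bool" where
  "lipschitz_domain \<Omega> \<longleftrightarrow> open \<Omega> \<and> connected \<Omega> \<and> \<Omega> \<noteq> {} \<and>
     (\<forall>p\<in>frontier \<Omega>. \<exists>r>0. \<exists>e::'c. \<exists>g::'c \<Rightarrow> real. \<exists>L.
        norm e = 1 \<and> L-lipschitz_on {v. v \<bullet> e = 0} g \<and>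
        \<Omega> \<inter> ball p r = {q \<in> ball p r. q \<bullet> e > g (q - (q \<bullet> e) *\<^sub>R e)})"

definition holder_seminorm ::
    "real \<Rightarrow> ('a::euclidean_space \<times> 'b::euclidean_space \<Rightarrow> real) \<Rightarrow> ereal" where
  "holder_seminorm s u = max
     (SUP x. SUP y. SUP z \<in> -{x}. ereal (\<bar>u (x,y) - u (z,y)\<bar> / norm (x - z) powr s))
     (SUP x. SUP y. SUP w \<in> -{y}. ereal (\<bar>u (x,y) - u (x,w)\<bar> / norm (y - w) powr s))"

definition W_s_inf ::
    "real \<Rightarrow> ('a::euclidean_space \<times> 'b::euclidean_space \<Rightarrow> real) set" where
  "W_s_inf s = {u. bounded (range u) \<and> holder_seminorm s u < \<infinity>}"

definition Lambda_inf ::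
    "real \<Rightarrow> ('a::euclidean_space \<times> 'b::euclidean_space) set \<Rightarrow> ereal" where
  "Lambda_inf s \<Omega> = (INF u \<in> {u \<in> W_s_inf s. (SUP p\<in>\<Omega>. \<bar>u p\<bar>) = 1 \<and>
                                     (\<forall>p. p \<notin> \<Omega> \<longrightarrow> u p = 0)}. holder_seminorm s u)"

definition R_s :: "real \<Rightarrow> ('a::euclidean_space \<times> 'b::euclidean_space) set \<Rightarrow> real" where
  "R_s s \<Omega> = (SUP (x,y)\<in>\<Omega>. INF (z,w)\<in>frontier \<Omega>. norm (x - z) powr s + norm (y - w) powr s)"

end

theory Submission
  imports Defs
begin

lemma powr_subadd:
  fixes a b s :: real
  assumes "0 \<le> a" "0 \<le> b" "0 < s" "s \<le> 1"
  shows "(a + b) powr s \<le> a powr s + b powr s"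
proof (cases "a + b = 0")
  case True
  then show ?thesis using assms by auto
next
  case False
  hence ab: "a + b > 0" using assms by linarith
  define t where "t = a / (a+b)"
  have t01: "0 \<le> t" "t \<le> 1" using assms ab by (auto simp: t_def field_simps)
  have t1: "t \<le> t powr s"
  proof (cases "t = 0")
    case False
    hence "t powr 1 \<le> t powr s" using t01 assms by (intro powr_mono') auto
    thus ?thesis using False t01 by simp
  qed simp
  have u01: "0 \<le> 1 - t" "1 - t \<le> 1" using t01 by auto
  have t2: "1 - t \<le> (1 - t) powr s"
  proof (cases "1 - t = 0")
    case False
    hence "(1-t) powr 1 \<le> (1-t) powr s" using u01 assms by (intro powr_mono') auto
    thus ?thesis using False u01 by simp
  qed simp
  have "a = t * (a+b)" "b = (1 - t) * (a + b)" using ab by (auto simp: t_def field_simps)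
  hence "a powr s + b powr s = (t powr s + (1-t) powr s) * (a+b) powr s"
    using t01 u01 ab by (metis distrib_right less_eq_real_def powr_mult)
  also have "\<dots> \<ge> 1 * (a+b) powr s"
    using t1 t2 by (intro mult_right_mono) auto
  finally show ?thesis by simp
qed


definition rho :: "real \<Rightarrow> ('a::euclidean_space \<times> 'b::euclidean_space) \<Rightarrow> ('a \<times> 'b) \<Rightarrow> real" where
  "rho s p q = norm (fst p - fst q) powr s + norm (snd p - snd q) powr s"

lemma norm_fst_le': "norm (fst (x::'a::real_normed_vector \<times> 'b::real_normed_vector)) \<le> norm x"
  using norm_fst_le[of "fst x" "snd x"] by simp
lemma norm_snd_le': "norm (snd (x::'a::real_normed_vector \<times> 'b::real_normed_vector)) \<le> norm x"
  using norm_snd_le[of "snd x" "fst x"] by simp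

lemma rho_nonneg: "0 \<le> rho s p q" by (simp add: rho_def)

lemma rho_sym: "rho s p q = rho s q p" by (simp add: rho_def norm_minus_commute)

lemma norm_powr_tri:
  fixes x y z :: "'a::real_normed_vector"
  assumes "0 < s" "s \<le> 1"
  shows "norm (x - z) powr s \<le> norm (x - y) powr s + norm (y - z) powr s"
proof -
  have "norm (x - z) powr s \<le> (norm (x - y) + norm (y - z)) powr s"
    using assms by (intro powr_mono2) (auto intro: norm_diff_triangle_le)
  also have "\<dots> \<le> norm (x - y) powr s + norm (y - z) powr s"
    using assms by (intro powr_subadd) auto
  finally show ?thesis .
qed

lemma rho_tri:
  assumes "0 < s" "s \<le> 1"
  shows "rho s p r \<le> rho s p q + rho s q r"
  using norm_powr_tri[OF assms, of "fst p" "fst r" "fst q"]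
        norm_powr_tri[OF assms, of "snd p" "snd r" "snd q"]
  by (simp add: rho_def)

lemma segment_frontier:
  fixes \<Omega> :: "('a::euclidean_space \<times> 'b::euclidean_space) set"
  assumes "p \<in> \<Omega>" "q \<notin> \<Omega>" "0 < s"
  shows "\<exists>r\<in>frontier \<Omega>. rho s p r \<le> rho s p q"
proof -
  have "closed_segment p q \<inter> frontier \<Omega> \<noteq> {}"
    using assms by (intro connected_Int_frontier) auto
  then obtain r where r: "r \<in> closed_segment p q" "r \<in> frontier \<Omega>" by blast
  then obtain u where u: "0 \<le> u" "u \<le> 1" "r = (1 - u) *\<^sub>R p + u *\<^sub>R q"
    by (auto simp: in_segment)
  have "fst p - fst r = u *\<^sub>R (fst p - fst q)" "snd p - snd r = u *\<^sub>R (snd p - snd q)"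
    unfolding u(3) by (simp_all add: algebra_simps)
  hence n: "norm (fst p - fst r) \<le> norm (fst p - fst q)" "norm (snd p - snd r) \<le> norm (snd p - snd q)"
    using u by (auto intro: mult_left_le_one_le)
  have "rho s p r \<le> rho s p q" unfolding rho_def
    using n assms by (intro add_mono powr_mono2) auto
  thus ?thesis using r by blast
qed

theorem lemma5p1:
  fixes \<Omega> :: "('a::euclidean_space \<times> 'b::euclidean_space) set" and s :: real
  assumes "lipschitz_domain \<Omega>" and "bounded \<Omega>" and "0 < s" and "s < 1"
  shows "Lambda_inf s \<Omega> = ereal (1 / R_s s \<Omega>)"
proof -
  have op: "open \<Omega>" and ne: "\<Omega> \<noteq> {}" using assms(1) by (auto simp: lipschitz_domain_def)
  have s1: "s \<le> 1" using assms(4) by simp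
  define F where "F = frontier \<Omega>"
  have FO: "F \<inter> \<Omega> = {}" using op by (auto simp: F_def frontier_def interior_open)
  have Fne: "F \<noteq> {}"
  proof -
    have "\<Omega> \<noteq> UNIV" using assms(2) not_bounded_UNIV by metis
    hence "UNIV \<inter> frontier \<Omega> \<noteq> {}" using ne by (intro connected_Int_frontier) auto
    thus ?thesis by (simp add: F_def)
  qed
  obtain B where B: "\<And>x. x \<in> closure \<Omega> \<Longrightarrow> norm x \<le> B"
    using bounded_closure[OF assms(2)] by (auto simp: bounded_iff)
  have Fcl: "F \<subseteq> closure \<Omega>" by (auto simp: F_def frontier_def)
  define d where "d p = (INF q\<in>F. rho s p q)" for p
  have bddb: "bdd_below (rho s p ` F)" for p by (rule bdd_belowI[of _ 0]) (auto simp: rho_nonneg)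
  have d_le: "d p \<le> rho s p q" if "q \<in> F" for p q
    unfolding d_def using that bddb by (intro cINF_lower) auto
  have d_nonneg: "0 \<le> d p" for p
    unfolding d_def using Fne by (intro cINF_greatest) (auto simp: rho_nonneg)
  have d_lip: "d p \<le> rho s p q + d q" for p q
  proof -
    have "d p - rho s p q \<le> d q" unfolding d_def[of q]
    proof (intro cINF_greatest[OF Fne])
      fix r assume "r \<in> F"
      thus "d p - rho s p q \<le> rho s q r" using d_le[of r p] rho_tri[OF assms(3) s1, of p r q] by simp
    qed
    thus ?thesis by simp
  qed
  have d_out: "d p \<le> rho s p q" if pq: "p \<in> \<Omega>" "q \<notin> \<Omega>" for p q
  proof -
    obtain r where "r \<in> F" "rho s p r \<le> rho s p q" using segment_frontier[OF pq assms(3)] F_def by blast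
    thus ?thesis using d_le[of r p] by linarith
  qed
  obtain q0 where q0: "q0 \<in> F" using Fne by blast
  define C where "C = 2 * (2 * B) powr s"
  have d_bnd: "d p \<le> C" if "p \<in> \<Omega>" for p
  proof -
    have pc: "p \<in> closure \<Omega>" using that closure_subset by blast
    have qc: "q0 \<in> closure \<Omega>" using q0 Fcl by blast
    have "norm (p - q0) \<le> 2 * B" using B[OF pc] B[OF qc] norm_triangle_ineq4[of p q0] by linarith
    hence "norm (fst p - fst q0) \<le> 2 * B" "norm (snd p - snd q0) \<le> 2 * B"
      using norm_fst_le'[of "p - q0"] norm_snd_le'[of "p - q0"] by auto
    hence "rho s p q0 \<le> C" unfolding rho_def C_def
      using powr_mono2[of s "norm (fst p - fst q0)" "2*B"] powr_mono2[of s "norm (snd p - snd q0)" "2*B"] assms(3)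
      by auto
    thus ?thesis using d_le[OF q0, of p] by linarith
  qed
  have bdda: "bdd_above (d ` \<Omega>)" using d_bnd by (intro bdd_aboveI2[of _ _ C]) blast
  define R where "R = (SUP p\<in>\<Omega>. d p)"
  have RR: "R_s s \<Omega> = R"
    unfolding R_s_def R_def d_def F_def rho_def by (simp add: split_def)
  have d_R: "d p \<le> R" if "p \<in> \<Omega>" for p unfolding R_def using bdda that by (intro cSUP_upper)
  have Rpos: "R > 0"
  proof -
    obtain p where p: "p \<in> \<Omega>" using ne by blast
    obtain e where e: "e > 0" "ball p e \<subseteq> \<Omega>" using op p open_contains_ball by blast
    have "(e/2) powr s \<le> d p" unfolding d_def
    proof (intro cINF_greatest[OF Fne])
      fix q assume q: "q \<in> F"
      hence "q \<notin> ball p e" using e FO by blast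
      hence "e \<le> norm (p - q)" by (simp add: dist_norm)
      also have "\<dots> \<le> norm (fst p - fst q) + norm (snd p - snd q)"
        using norm_Pair_le[of "fst p - fst q" "snd p - snd q"] by (cases p, cases q) simp
      finally have "e/2 \<le> norm (fst p - fst q) \<or> e/2 \<le> norm (snd p - snd q)" by linarith
      thus "(e/2) powr s \<le> rho s p q"
      proof (elim disjE)
        assume h: "e/2 \<le> norm (fst p - fst q)"
        have "(e/2) powr s \<le> norm (fst p - fst q) powr s" using h e(1) assms(3) by (intro powr_mono2) auto
        thus ?thesis using powr_ge_zero[of "norm (snd p - snd q)" s] unfolding rho_def by linarith
      next
        assume h: "e/2 \<le> norm (snd p - snd q)"
        have "(e/2) powr s \<le> norm (snd p - snd q) powr s" using h e(1) assms(3) by (intro powr_mono2) auto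
        thus ?thesis using powr_ge_zero[of "norm (fst p - fst q)" s] unfolding rho_def by linarith
      qed
    qed
    moreover have "(e/2) powr s > 0" using e by simp
    ultimately show ?thesis using d_R[OF p] by linarith
  qed
  define u0 where "u0 p = (if p \<in> \<Omega> then d p / R else 0)" for p
  have u0_lip: "\<bar>u0 p - u0 q\<bar> \<le> rho s p q / R" for p q
  proof -
    have "\<bar>d p - d q\<bar> \<le> rho s p q" using d_lip[of p q] d_lip[of q p] rho_sym[of s p q] by linarith
    moreover have "d p \<le> rho s p q" if "p \<in> \<Omega>" "q \<notin> \<Omega>" using d_out that by blast
    moreover have "d q \<le> rho s p q" if "q \<in> \<Omega>" "p \<notin> \<Omega>" using d_out[of q p] that rho_sym[of s p q] by simp
    ultimately have "\<bar>R * u0 p - R * u0 q\<bar> \<le> rho s p q"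
      using Rpos d_nonneg[of p] d_nonneg[of q] rho_nonneg[of s p q] by (auto simp: u0_def)
    hence "R * \<bar>u0 p - u0 q\<bar> \<le> rho s p q" using Rpos by (simp add: abs_mult right_diff_distrib[symmetric])
    thus ?thesis using Rpos by (simp add: field_simps)
  qed
  have u0_01: "0 \<le> u0 p \<and> u0 p \<le> 1" for p
    using d_nonneg[of p] d_R[of p] Rpos by (auto simp: u0_def field_simps)
  have quot: "\<bar>v\<bar> / a \<le> 1 / R" if "\<bar>v\<bar> \<le> a / R" "a > 0" for v a
  proof -
    have "\<bar>v\<bar> / a \<le> (a / R) / a" using that by (intro divide_right_mono) auto
    thus ?thesis using that by simp
  qed
  have H0: "holder_seminorm s u0 \<le> ereal (1 / R)"
  proof -
    have A: "\<bar>u0 (x,y) - u0 (z,y)\<bar> / norm (x - z) powr s \<le> 1/R" if "z \<noteq> x" for x y z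
      using u0_lip[of "(x,y)" "(z,y)"] that assms(3) by (intro quot) (auto simp: rho_def)
    have B: "\<bar>u0 (x,y) - u0 (x,w)\<bar> / norm (y - w) powr s \<le> 1/R" if "w \<noteq> y" for x y w
      using u0_lip[of "(x,y)" "(x,w)"] that assms(3) by (intro quot) (auto simp: rho_def)
    show ?thesis unfolding holder_seminorm_def
      by (intro max.boundedI SUP_least) (auto simp: A B)
  qed
  have u0_in: "u0 \<in> {u \<in> W_s_inf s. (SUP p\<in>\<Omega>. \<bar>u p\<bar>) = 1 \<and> (\<forall>p. p \<notin> \<Omega> \<longrightarrow> u p = 0)}"
  proof -
    have "bounded (range u0)" using u0_01 by (auto simp: bounded_real intro!: exI[of _ 1])
    moreover have "holder_seminorm s u0 < \<infinity>" using H0 by (rule le_less_trans) simp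
    moreover have "(SUP p\<in>\<Omega>. \<bar>u0 p\<bar>) = 1"
    proof (rule antisym)
      show "(SUP p\<in>\<Omega>. \<bar>u0 p\<bar>) \<le> 1" using ne u0_01 by (intro cSUP_least) auto
      have bd: "bdd_above ((\<lambda>p. \<bar>u0 p\<bar>) ` \<Omega>)" using u0_01 by (intro bdd_aboveI2[of _ _ 1]) auto
      define S where "S = (SUP p\<in>\<Omega>. \<bar>u0 p\<bar>)"
      have "d p \<le> S * R" if "p \<in> \<Omega>" for p
      proof -
        have "\<bar>u0 p\<bar> \<le> S" unfolding S_def using bd that by (intro cSUP_upper)
        thus ?thesis using that Rpos d_nonneg[of p] by (simp add: u0_def field_simps)
      qed
      hence "R \<le> S * R" unfolding R_def using ne by (intro cSUP_least) auto
      thus "1 \<le> (SUP p\<in>\<Omega>. \<bar>u0 p\<bar>)" using Rpos unfolding S_def by simp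
    qed
    moreover have "\<forall>p. p \<notin> \<Omega> \<longrightarrow> u0 p = 0" by (simp add: u0_def)
    ultimately show ?thesis by (simp add: W_s_inf_def)
  qed
  have LB: "ereal (1 / R) \<le> holder_seminorm s u"
    if uin: "u \<in> {u \<in> W_s_inf s. (SUP p\<in>\<Omega>. \<bar>u p\<bar>) = 1 \<and> (\<forall>p. p \<notin> \<Omega> \<longrightarrow> u p = 0)}" for u
  proof -
    define H where "H = holder_seminorm s u"
    have Hfin: "H < \<infinity>" using uin by (simp add: W_s_inf_def H_def)
    have Hup1: "ereal (\<bar>u (x,y) - u (z,y)\<bar> / norm (x - z) powr s) \<le> H" if "z \<noteq> x" for x y z
    proof -
      have "ereal (\<bar>u (x,y) - u (z,y)\<bar> / norm (x - z) powr s)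
          \<le> (SUP x. SUP y. SUP z \<in> -{x}. ereal (\<bar>u (x,y) - u (z,y)\<bar> / norm (x - z) powr s))"
        by (rule SUP_upper2[of x], simp, rule SUP_upper2[of y], simp, rule SUP_upper, use that in auto)
      thus ?thesis unfolding H_def holder_seminorm_def by (rule max.coboundedI1)
    qed
    have Hup2: "ereal (\<bar>u (x,y) - u (x,w)\<bar> / norm (y - w) powr s) \<le> H" if "w \<noteq> y" for x y w
    proof -
      have "ereal (\<bar>u (x,y) - u (x,w)\<bar> / norm (y - w) powr s)
          \<le> (SUP x. SUP y. SUP w \<in> -{y}. ereal (\<bar>u (x,y) - u (x,w)\<bar> / norm (y - w) powr s))"
        by (rule SUP_upper2[of x], simp, rule SUP_upper2[of y], simp, rule SUP_upper, use that in auto)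
      thus ?thesis unfolding H_def holder_seminorm_def by (rule max.coboundedI2)
    qed
    obtain b :: 'a where b: "b \<in> Basis" using nonempty_Basis by blast
    have "b \<noteq> 0" using b nonzero_Basis by blast
    hence "ereal (\<bar>u (0,0) - u (b,0)\<bar> / norm (0 - b) powr s) \<le> H" by (intro Hup1) auto
    moreover have "0 \<le> ereal (\<bar>u (0,0) - u (b,0)\<bar> / norm (0 - b) powr s)" by simp
    ultimately have H0: "0 \<le> H" by (rule order.trans[rotated])
    obtain h where h: "H = ereal h" using Hfin H0 by (cases H) auto
    have h0: "0 \<le> h" using H0 h by simp
    have p1: "\<bar>u (x,y) - u (z,y)\<bar> \<le> h * norm (x - z) powr s" for x y z
    proof (cases "z = x")
      case False
      hence "\<bar>u (x,y) - u (z,y)\<bar> / norm (x - z) powr s \<le> h" using Hup1[OF False, of y] h by simp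
      moreover have "norm (x - z) powr s > 0" using False by simp
      ultimately show ?thesis by (simp add: field_simps)
    qed simp
    have p2: "\<bar>u (x,y) - u (x,w)\<bar> \<le> h * norm (y - w) powr s" for x y w
    proof (cases "w = y")
      case False
      hence "\<bar>u (x,y) - u (x,w)\<bar> / norm (y - w) powr s \<le> h" using Hup2[OF False, of x] h by simp
      moreover have "norm (y - w) powr s > 0" using False by simp
      ultimately show ?thesis by (simp add: field_simps)
    qed simp
    have pr: "\<bar>u p\<bar> \<le> h * rho s p r" if "p \<in> \<Omega>" "r \<in> F" for p r
    proof -
      obtain x y where p: "p = (x,y)" by (cases p)
      obtain z w where r: "r = (z,w)" by (cases r)
      have "u (z,w) = 0" using uin that(2) FO r by auto
      hence "\<bar>u p\<bar> \<le> \<bar>u (x,y) - u (z,y)\<bar> + \<bar>u (z,y) - u (z,w)\<bar>" unfolding p by linarith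
      also have "\<dots> \<le> h * norm (x - z) powr s + h * norm (y - w) powr s" using p1 p2 by (intro add_mono)
      finally show ?thesis by (simp add: p r rho_def distrib_left)
    qed
    have pd: "\<bar>u p\<bar> \<le> h * d p" if "p \<in> \<Omega>" for p
    proof (cases "h = 0")
      case True
      obtain r where "r \<in> F" using Fne by blast
      thus ?thesis using pr[OF that] True by auto
    next
      case False
      hence hp: "h > 0" using h0 by simp
      have "\<bar>u p\<bar> / h \<le> d p" unfolding d_def
      proof (rule cINF_greatest[OF Fne])
        fix r assume "r \<in> F"
        thus "\<bar>u p\<bar> / h \<le> rho s p r" using pr[OF that] hp by (simp add: field_simps)
      qed
      thus ?thesis using hp by (simp add: field_simps)
    qed
    have "(SUP p\<in>\<Omega>. \<bar>u p\<bar>) \<le> h * R"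
    proof (rule cSUP_least[OF ne])
      fix p assume "p \<in> \<Omega>"
      thus "\<bar>u p\<bar> \<le> h * R" using pd[of p] d_R[of p] h0 mult_left_mono[of "d p" R h] by linarith
    qed
    hence "1 \<le> h * R" using uin by simp
    hence "1 / R \<le> h" using Rpos by (simp add: field_simps)
    thus ?thesis using h H_def by simp
  qed
  have "Lambda_inf s \<Omega> = ereal (1 / R)"
    unfolding Lambda_inf_def
  proof (rule antisym)
    show "(INF u \<in> {u \<in> W_s_inf s. (SUP p\<in>\<Omega>. \<bar>u p\<bar>) = 1 \<and> (\<forall>p. p \<notin> \<Omega> \<longrightarrow> u p = 0)}. holder_seminorm s u) \<le> ereal (1 / R)"
      using INF_lower[OF u0_in, of "holder_seminorm s"] H0 by (rule order.trans)
    show "ereal (1 / R) \<le> (INF u \<in> {u \<in> W_s_inf s. (SUP p\<in>\<Omega>. \<bar>u p\<bar>) = 1 \<and> (\<forall>p. p \<notin> \<Omega> \<longrightarrow> u p = 0)}. holder_seminorm s u)"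
      by (rule INF_greatest) (rule LB)
  qed
  thus ?thesis using RR by simp
qed

end
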